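(* For every finite $K\ge1$, the exact sequence \[0\to\bigoplus_{i=1}^K\mathbb Z\overset{i}{\to}\bigoplus_{i=1}^K\mathbb Z[\tfrac12]\overset{\pi}{\to}\bigoplus_{i=1}^K\mathbb Z(2^\infty)\to0\] (componentwise inclusion and quotient maps) is coarsely split.
   Context: $\mathbb Z[\tfrac12]=\{m/2^k:m\in\mathbb Z,k\ge0\}$; $\mathbb Z(2^\infty)\cong\mathbb Z[\tfrac12]/\mathbb Z$. A proper left invariant metric is $d(g,h)=\|g^{-1}h\|$ for a proper norm (trivial only at identity, symmetric, subadditive, finite balls). An exact sequence $0\to A\overset{i}{\to}G\overset{\pi}{\to}Q\to0$ is coarsely split if there are proper left invariant metrics $d_A,d_G,d_Q$ and a coarse equivalence $f:(G,d_G)\to(A\oplus Q,d_A\oplus d_Q)$ ($\ell_1$ sum metric) with $f\circ i$ at bounded distance from $a\mapsto(a,0)$ and $\pi'\circ f$ at bounded distance from $\pi$, $\pi'$ the projection onto $Q$. Coarse maps: for each $\delta$ there is $\epsilon$ with $d(x,y)\le\delta\Rightarrow d(f x,f y)\le\epsilon$; coarse equivalences are coarse maps with coarse inverses up to bounded distance. *)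

theory Defs
  imports Complex_Main "HOL-Algebra.Group" "HOL-Algebra.Coset"
begin

definition proper_norm :: "('a, 'b) monoid_scheme \<Rightarrow> ('a \<Rightarrow> real) \<Rightarrow> bool" where
  "proper_norm G N \<longleftrightarrow>
     (\<forall>g\<in>carrier G. N g = 0 \<longleftrightarrow> g = \<one>\<^bsub>G\<^esub>) \<and>
     (\<forall>g\<in>carrier G. N (inv\<^bsub>G\<^esub> g) = N g) \<and>
     (\<forall>g\<in>carrier G. \<forall>h\<in>carrier G. N (g \<otimes>\<^bsub>G\<^esub> h) \<le> N g + N h) \<and>
     (\<forall>r::real. finite {g\<in>carrier G. N g \<le> r})"

definition norm_dist :: "('a, 'b) monoid_scheme \<Rightarrow> ('a \<Rightarrow> real) \<Rightarrow> 'a \<Rightarrow> 'a \<Rightarrow> real" where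
  "norm_dist G N g h = N (inv\<^bsub>G\<^esub> g \<otimes>\<^bsub>G\<^esub> h)"

definition coarse_map ::
  "'x set \<Rightarrow> ('x \<Rightarrow> 'x \<Rightarrow> real) \<Rightarrow> 'y set \<Rightarrow> ('y \<Rightarrow> 'y \<Rightarrow> real) \<Rightarrow> ('x \<Rightarrow> 'y) \<Rightarrow> bool" where
  "coarse_map X dX Y dY f \<longleftrightarrow>
     (\<forall>x\<in>X. f x \<in> Y) \<and>
     (\<forall>\<delta>. \<exists>\<epsilon>. \<forall>x\<in>X. \<forall>y\<in>X. dX x y \<le> \<delta> \<longrightarrow> dY (f x) (f y) \<le> \<epsilon>)"

definition coarse_equivalence ::
  "'x set \<Rightarrow> ('x \<Rightarrow> 'x \<Rightarrow> real) \<Rightarrow> 'y set \<Rightarrow> ('y \<Rightarrow> 'y \<Rightarrow> real) \<Rightarrow> ('x \<Rightarrow> 'y) \<Rightarrow> bool" where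
  "coarse_equivalence X dX Y dY f \<longleftrightarrow>
     coarse_map X dX Y dY f \<and>
     (\<exists>g. coarse_map Y dY X dX g \<and>
          (\<exists>C. (\<forall>x\<in>X. dX (g (f x)) x \<le> C) \<and> (\<forall>y\<in>Y. dY (f (g y)) y \<le> C)))"

definition short_exact ::
  "('a, 'm) monoid_scheme \<Rightarrow> ('g, 'n) monoid_scheme \<Rightarrow> ('q, 'o) monoid_scheme
   \<Rightarrow> ('a \<Rightarrow> 'g) \<Rightarrow> ('g \<Rightarrow> 'q) \<Rightarrow> bool" where
  "short_exact A G Q i p \<longleftrightarrow>
     group A \<and> group G \<and> group Q \<and>
     i \<in> hom A G \<and> p \<in> hom G Q \<and>
     inj_on i (carrier A) \<and> p ` carrier G = carrier Q \<and>
     i ` carrier A = {g\<in>carrier G. p g = \<one>\<^bsub>Q\<^esub>}"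

definition coarsely_split ::
  "('a, 'm) monoid_scheme \<Rightarrow> ('g, 'n) monoid_scheme \<Rightarrow> ('q, 'o) monoid_scheme
   \<Rightarrow> ('a \<Rightarrow> 'g) \<Rightarrow> ('g \<Rightarrow> 'q) \<Rightarrow> bool" where
  "coarsely_split A G Q i p \<longleftrightarrow>
     short_exact A G Q i p \<and>
     (\<exists>NA NG NQ f.
        proper_norm A NA \<and> proper_norm G NG \<and> proper_norm Q NQ \<and>
        (let dA = norm_dist A NA; dG = norm_dist G NG; dQ = norm_dist Q NQ;
             dS = (\<lambda>(a, q) (a', q'). dA a a' + dQ q q') in
         coarse_equivalence (carrier G) dG (carrier A \<times> carrier Q) dS f \<and>
         (\<exists>C. \<forall>a\<in>carrier A. dS (f (i a)) (a, \<one>\<^bsub>Q\<^esub>) \<le> C) \<and>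
         (\<exists>C. \<forall>g\<in>carrier G. dQ (snd (f g)) (p g) \<le> C)))"

definition dyadic :: "rat \<Rightarrow> bool" where
  "dyadic q \<longleftrightarrow> (\<exists>m::int. \<exists>k::nat. q = of_int m / 2 ^ k)"

definition frac_rat :: "rat \<Rightarrow> rat" where
  "frac_rat x = x - of_int \<lfloor>x\<rfloor>"

definition Zsum :: "nat \<Rightarrow> (nat \<Rightarrow> int) monoid" where
  "Zsum K = \<lparr>carrier = {v. \<forall>n\<ge>K. v n = 0},
             monoid.mult = (\<lambda>v w n. v n + w n), one = (\<lambda>_. 0)\<rparr>"

definition Dsum :: "nat \<Rightarrow> (nat \<Rightarrow> rat) monoid" where
  "Dsum K = \<lparr>carrier = {v. (\<forall>n<K. dyadic (v n)) \<and> (\<forall>n\<ge>K. v n = 0)},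
             monoid.mult = (\<lambda>v w n. v n + w n), one = (\<lambda>_. 0)\<rparr>"

text \<open>Direct sum of K copies of Z(2^\<infinity>) = Z[1/2]/Z, elements represented by
  their unique representatives in [0,1).\<close>
definition Psum :: "nat \<Rightarrow> (nat \<Rightarrow> rat) monoid" where
  "Psum K = \<lparr>carrier = {v. (\<forall>n<K. dyadic (v n) \<and> 0 \<le> v n \<and> v n < 1) \<and> (\<forall>n\<ge>K. v n = 0)},
             monoid.mult = (\<lambda>v w n. frac_rat (v n + w n)), one = (\<lambda>_. 0)\<rparr>"

definition incl_sum :: "(nat \<Rightarrow> int) \<Rightarrow> (nat \<Rightarrow> rat)" where
  "incl_sum v = (\<lambda>n. of_int (v n))"

definition quot_sum :: "(nat \<Rightarrow> rat) \<Rightarrow> (nat \<Rightarrow> rat)" where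
  "quot_sum v = (\<lambda>n. frac_rat (v n))"

end

theory Submission
  imports Defs
begin

definition den :: "rat \<Rightarrow> int" where "den x = snd (quotient_of x)"

lemma den_pos: "den x > 0"
  unfolding den_def by (rule quotient_of_denom_pos')

lemma den_mult: "of_int (den x) * x = of_int (fst (quotient_of x))"
proof -
  obtain a b where q: "quotient_of x = (a,b)" by (cases "quotient_of x")
  have "x = of_int a / of_int b" by (rule quotient_of_div[OF q])
  moreover have "b > 0" using quotient_of_denom_pos[OF q] .
  ultimately have "of_int b * x = of_int a" by simp
  thus ?thesis by (simp add: den_def q)
qed

lemma den_dvd:
  assumes "d \<noteq> 0" "of_int d * x = of_int n"
  shows "den x dvd d"
proof -
  obtain a b where q: "quotient_of x = (a,b)" by (cases "quotient_of x")
  have x: "x = of_int a / of_int b" by (rule quotient_of_div[OF q])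
  have b: "b > 0" using quotient_of_denom_pos[OF q] .
  have cp: "coprime a b" using quotient_of_coprime[OF q] .
  from assms(2) x b have "of_int d * of_int a = (of_int n * of_int b :: rat)"
    by (simp add: field_simps)
  hence "d * a = n * b" by (metis of_int_eq_iff of_int_mult)
  hence "b dvd d * a" by (metis dvd_triv_right)
  hence "b dvd d" using cp by (metis coprime_commute coprime_dvd_mult_left_iff)
  thus ?thesis by (simp add: den_def q)
qed

lemma den_add_int: "den (x + of_int m) = den x"
proof -
  have pos: "den x > 0" "den (x + of_int m) > 0" by (rule den_pos)+
  have "of_int (den x) * (x + of_int m) = of_int (fst (quotient_of x) + den x * m)"
    using den_mult[of x] by (simp add: algebra_simps)
  note eq = this
  have 1: "den (x + of_int m) dvd den x" using den_dvd[OF _ eq] pos by auto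
  have "of_int (den (x + of_int m)) * x = of_int (fst (quotient_of (x + of_int m)) - den (x + of_int m) * m)"
    using den_mult[of "x + of_int m"] by (simp add: algebra_simps)
  note eq = this
  have 2: "den x dvd den (x + of_int m)" using den_dvd[OF _ eq] pos by auto
  show ?thesis using 1 2 pos by (simp add: zdvd_antisym_nonneg)
qed

lemma den_uminus: "den (- x) = den x"
proof -
  have pos: "den x > 0" "den (- x) > 0" by (rule den_pos)+
  have "of_int (den x) * (- x) = of_int (- fst (quotient_of x))"
    using den_mult[of x] by simp
  note eq = this
  have 1: "den (- x) dvd den x" using den_dvd[OF _ eq] pos by auto
  have "of_int (den (-x)) * x = of_int (- fst (quotient_of (-x)))"
    using den_mult[of "-x"] by simp
  note eq = this
  have 2: "den x dvd den (-x)" using den_dvd[OF _ eq] pos by auto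
  show ?thesis using 1 2 pos by (simp add: zdvd_antisym_nonneg)
qed

lemma den_add_le: "den (x + y) \<le> den x * den y"
proof -
  have pos: "den x > 0" "den y > 0" by (rule den_pos)+
  have "of_int (den x * den y) * (x + y) =
      (of_int (den x) * x) * of_int (den y) + (of_int (den y) * y) * of_int (den x)"
    by (simp add: algebra_simps)
  also have "\<dots> = of_int (fst (quotient_of x) * den y + fst (quotient_of y) * den x)"
    unfolding den_mult by simp
  finally have eq: "of_int (den x * den y) * (x + y) = of_int (fst (quotient_of x) * den y + fst (quotient_of y) * den x)" .
  have "den x * den y \<noteq> 0" using pos by simp
  from den_dvd[OF this eq] have "den (x + y) dvd den x * den y" .
  thus ?thesis using pos by (simp add: zdvd_imp_le)
qed

lemma den_int: "den (of_int m) = 1"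
  by (simp add: den_def)

lemma den_1_iff: "den x = 1 \<longleftrightarrow> x = of_int \<lfloor>x\<rfloor>"
proof
  assume "den x = 1"
  hence "x = of_int (fst (quotient_of x))" using den_mult[of x] by simp
  thus "x = of_int \<lfloor>x\<rfloor>" by (metis floor_of_int)
next
  assume "x = of_int \<lfloor>x\<rfloor>"
  thus "den x = 1" by (metis den_int)
qed

lemma frac_ge0: "frac_rat x \<ge> 0"
  unfolding frac_rat_def by simp
lemma frac_lt1: "frac_rat x < 1"
  unfolding frac_rat_def by linarith
lemma frac_add_int: "frac_rat (x + of_int m) = frac_rat x"
  unfolding frac_rat_def by simp
lemma frac_id: "0 \<le> x \<Longrightarrow> x < 1 \<Longrightarrow> frac_rat x = x"
  unfolding frac_rat_def by (simp add: floor_eq_iff)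
lemma den_frac: "den (frac_rat x) = den x"
  unfolding frac_rat_def using den_add_int[of x "- \<lfloor>x\<rfloor>"] by simp
lemma frac_frac_add: "frac_rat (frac_rat x + y) = frac_rat (x + y)"
  unfolding frac_rat_def
  using frac_add_int[of "x + y" "- \<lfloor>x\<rfloor>"] by (simp add: frac_rat_def algebra_simps)
lemma frac_add_frac: "frac_rat (x + frac_rat y) = frac_rat (x + y)"
  using frac_frac_add[of y x] by (simp add: add.commute)
lemma frac_int: "frac_rat (of_int m) = 0"
  unfolding frac_rat_def by simp
lemma frac_zero_iff: "frac_rat x = 0 \<longleftrightarrow> x = of_int \<lfloor>x\<rfloor>"
  unfolding frac_rat_def by auto

lemma dyadic_add: "dyadic x \<Longrightarrow> dyadic y \<Longrightarrow> dyadic (x + y)"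
proof -
  assume "dyadic x" "dyadic y"
  then obtain m k m' k' where x: "x = of_int m / 2 ^ k" and y: "y = of_int m' / 2 ^ k'"
    unfolding dyadic_def by blast
  have "x + y = of_int (m * 2 ^ k' + m' * 2 ^ k) / 2 ^ (k + k')"
    by (simp add: x y field_simps power_add)
  thus "dyadic (x + y)" unfolding dyadic_def by blast
qed

lemma dyadic_uminus: "dyadic x \<Longrightarrow> dyadic (- x)"
  unfolding dyadic_def by (metis minus_divide_left of_int_minus)

lemma dyadic_int: "dyadic (of_int m)"
  unfolding dyadic_def by (rule exI[of _ m], rule exI[of _ 0]) simp

lemma dyadic_zero[simp]: "dyadic 0"
  using dyadic_int[of 0] by simp

lemma dyadic_frac: assumes d: "dyadic x" shows "dyadic (frac_rat x)"
proof -
  have "dyadic (x + of_int (- \<lfloor>x\<rfloor>))" by (rule dyadic_add[OF d dyadic_int])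
  thus ?thesis unfolding frac_rat_def by simp
qed

lemma frac_zero[simp]: "frac_rat 0 = 0"
  unfolding frac_rat_def by simp

lemma fun_zero_iff:
  fixes g :: "nat \<Rightarrow> 'a::zero"
  assumes "\<forall>n\<ge>K. g n = 0"
  shows "(\<forall>n\<in>{..<K}. g n = 0) \<longleftrightarrow> g = (\<lambda>_. 0)"
proof
  assume a: "\<forall>n\<in>{..<K}. g n = 0"
  show "g = (\<lambda>_. 0)"
  proof
    fix n show "g n = 0" using a assms by (cases "n < K") auto
  qed
qed auto

lemma Zsum_group: "group (Zsum K)"
proof (rule groupI)
  fix x assume "x \<in> carrier (Zsum K)"
  thus "\<exists>y\<in>carrier (Zsum K). y \<otimes>\<^bsub>Zsum K\<^esub> x = \<one>\<^bsub>Zsum K\<^esub>"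
    by (intro bexI[of _ "\<lambda>n. - x n"]) (auto simp: Zsum_def)
qed (auto simp: Zsum_def)

lemma Dsum_group: "group (Dsum K)"
proof (rule groupI)
  fix x assume "x \<in> carrier (Dsum K)"
  thus "\<exists>y\<in>carrier (Dsum K). y \<otimes>\<^bsub>Dsum K\<^esub> x = \<one>\<^bsub>Dsum K\<^esub>"
    by (intro bexI[of _ "\<lambda>n. - x n"]) (auto simp: Dsum_def dyadic_uminus)
qed (auto simp: Dsum_def dyadic_add dyadic_int[of 0, simplified])

lemma Psum_frac: "x \<in> carrier (Psum K) \<Longrightarrow> frac_rat (x n) = x n"
  by (cases "n < K") (auto simp: Psum_def frac_id)

lemma Psum_group: "group (Psum K)"
proof (rule groupI)
  fix x assume x: "x \<in> carrier (Psum K)"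
  thus "\<exists>y\<in>carrier (Psum K). y \<otimes>\<^bsub>Psum K\<^esub> x = \<one>\<^bsub>Psum K\<^esub>"
    by (intro bexI[of _ "\<lambda>n. frac_rat (- x n)"])
       (auto simp: Psum_def frac_frac_add dyadic_frac dyadic_uminus frac_ge0 frac_lt1)
next
  fix x assume "x \<in> carrier (Psum K)"
  thus "\<one>\<^bsub>Psum K\<^esub> \<otimes>\<^bsub>Psum K\<^esub> x = x"
    using Psum_frac[of x K] by (auto simp: Psum_def)
next
  fix x y z assume "x \<in> carrier (Psum K)" "y \<in> carrier (Psum K)" "z \<in> carrier (Psum K)"
  show "x \<otimes>\<^bsub>Psum K\<^esub> y \<otimes>\<^bsub>Psum K\<^esub> z = x \<otimes>\<^bsub>Psum K\<^esub> (y \<otimes>\<^bsub>Psum K\<^esub> z)"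
    by (auto simp: Psum_def frac_frac_add frac_add_frac add.assoc)
qed (auto simp: Psum_def frac_ge0 frac_lt1 dyadic_frac dyadic_add dyadic_int[of 0, simplified])

lemma Zsum_inv: "v \<in> carrier (Zsum K) \<Longrightarrow> inv\<^bsub>Zsum K\<^esub> v = (\<lambda>n. - v n)"
  by (rule group.inv_equality[OF Zsum_group]) (auto simp: Zsum_def)

lemma Dsum_inv: "v \<in> carrier (Dsum K) \<Longrightarrow> inv\<^bsub>Dsum K\<^esub> v = (\<lambda>n. - v n)"
  by (rule group.inv_equality[OF Dsum_group]) (auto simp: Dsum_def dyadic_uminus)

lemma Psum_inv: "v \<in> carrier (Psum K) \<Longrightarrow> inv\<^bsub>Psum K\<^esub> v = (\<lambda>n. frac_rat (- v n))"
  by (rule group.inv_equality[OF Psum_group])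
     (auto simp: Psum_def frac_frac_add dyadic_frac dyadic_uminus frac_ge0 frac_lt1)

lemma short_exact_main: "short_exact (Zsum K) (Dsum K) (Psum K) incl_sum quot_sum"
  unfolding short_exact_def
proof (intro conjI)
  show "incl_sum \<in> hom (Zsum K) (Dsum K)"
    by (rule homI) (auto simp: Zsum_def Dsum_def incl_sum_def dyadic_int)
  show "quot_sum \<in> hom (Dsum K) (Psum K)"
    by (rule homI) (auto simp: Psum_def Dsum_def quot_sum_def dyadic_frac frac_ge0 frac_lt1
        frac_frac_add frac_add_frac)
  show "inj_on incl_sum (carrier (Zsum K))"
    by (rule inj_onI) (auto simp: incl_sum_def fun_eq_iff)
  show "quot_sum ` carrier (Dsum K) = carrier (Psum K)"
  proof
    show "quot_sum ` carrier (Dsum K) \<subseteq> carrier (Psum K)"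
      by (auto simp: Psum_def Dsum_def quot_sum_def dyadic_frac frac_ge0 frac_lt1)
    show "carrier (Psum K) \<subseteq> quot_sum ` carrier (Dsum K)"
    proof
      fix q assume q: "q \<in> carrier (Psum K)"
      hence "quot_sum q = q" using Psum_frac[OF q] by (auto simp: quot_sum_def)
      moreover have "q \<in> carrier (Dsum K)" using q by (auto simp: Psum_def Dsum_def)
      ultimately show "q \<in> quot_sum ` carrier (Dsum K)" by (metis image_eqI)
    qed
  qed
  show "incl_sum ` carrier (Zsum K) = {g \<in> carrier (Dsum K). quot_sum g = \<one>\<^bsub>Psum K\<^esub>}"
  proof
    show "incl_sum ` carrier (Zsum K) \<subseteq> {g \<in> carrier (Dsum K). quot_sum g = \<one>\<^bsub>Psum K\<^esub>}"
      by (auto simp: Zsum_def Dsum_def Psum_def incl_sum_def quot_sum_def dyadic_int frac_int)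
    show "{g \<in> carrier (Dsum K). quot_sum g = \<one>\<^bsub>Psum K\<^esub>} \<subseteq> incl_sum ` carrier (Zsum K)"
    proof
      fix g assume g: "g \<in> {g \<in> carrier (Dsum K). quot_sum g = \<one>\<^bsub>Psum K\<^esub>}"
      hence z: "\<And>n. frac_rat (g n) = 0" and gK: "\<And>n. n \<ge> K \<Longrightarrow> g n = 0"
        by (auto simp: Dsum_def Psum_def quot_sum_def fun_eq_iff)
      have "g = incl_sum (\<lambda>n. \<lfloor>g n\<rfloor>)"
        using z by (auto simp: incl_sum_def fun_eq_iff frac_zero_iff)
      moreover have "(\<lambda>n. \<lfloor>g n\<rfloor>) \<in> carrier (Zsum K)" using gK by (auto simp: Zsum_def)
      ultimately show "g \<in> incl_sum ` carrier (Zsum K)" by blast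
    qed
  qed
qed (auto intro: Zsum_group Dsum_group Psum_group)

lemma ln_den_ge0: "ln (real_of_int (den x)) \<ge> 0"
  using den_pos[of x] by simp

lemma ln_den_eq0: "ln (real_of_int (den x)) = 0 \<longleftrightarrow> den x = 1"
  using den_pos[of x] by (simp add: ln_eq_zero_iff)

lemma ln_den_add: "ln (real_of_int (den (x + y))) \<le> ln (real_of_int (den x)) + ln (real_of_int (den y))"
proof -
  have p: "den x > 0" "den y > 0" "den (x+y) > 0" by (rule den_pos)+
  have "real_of_int (den (x + y)) \<le> real_of_int (den x) * real_of_int (den y)"
    using den_add_le[of x y] by (metis of_int_le_iff of_int_mult)
  hence "ln (real_of_int (den (x + y))) \<le> ln (real_of_int (den x) * real_of_int (den y))"
    using p by simp
  thus ?thesis using p by (simp add: ln_mult)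
qed

lemma finite_funs:
  assumes "finite S"
  shows "finite {v::nat\<Rightarrow>'a::zero. (\<forall>n<K. v n \<in> S) \<and> (\<forall>n\<ge>K. v n = 0)}" (is "finite ?A")
proof -
  have inj: "inj_on (\<lambda>v. restrict v {..<K}) ?A"
  proof (rule inj_onI)
    fix v w assume v: "v \<in> ?A" and w: "w \<in> ?A" and e: "restrict v {..<K} = restrict w {..<K}"
    show "v = w"
    proof
      fix n show "v n = w n"
      proof (cases "n < K")
        case True thus ?thesis using fun_cong[OF e, of n] by simp
      next
        case False thus ?thesis using v w by auto
      qed
    qed
  qed
  have "(\<lambda>v. restrict v {..<K}) ` ?A \<subseteq> PiE {..<K} (\<lambda>_. S)"
    by (intro image_subsetI) (auto simp: Pi_def)
  hence "finite ((\<lambda>v. restrict v {..<K}) ` ?A)"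
    using finite_PiE[of "{..<K}" "\<lambda>_. S"] assms by (auto intro: finite_subset)
  thus ?thesis using finite_imageD[OF _ inj] by blast
qed

lemma bounded_rats_finite:
  "finite {x::rat. real_of_int (den x) \<le> B \<and> \<bar>real_of_rat x\<bar> \<le> C}" (is "finite ?S")
proof -
  define M where "M = max \<lceil>B\<rceil> \<lceil>B * C\<rceil>"
  have "?S \<subseteq> (\<lambda>(a,b). of_int a / of_int b) ` ({-M..M} \<times> {-M..M})"
  proof
    fix x assume x: "x \<in> ?S"
    obtain a b where q: "quotient_of x = (a,b)" by (cases "quotient_of x")
    have xab: "x = of_int a / of_int b" by (rule quotient_of_div[OF q])
    have b: "b = den x" by (simp add: den_def q)
    have bpos: "b > 0" using den_pos[of x] b by simp
    have "of_int b * x = of_int a" using den_mult[of x] by (simp add: b[symmetric] q)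
    hence ra: "real_of_int a = real_of_int b * real_of_rat x"
      by (metis of_rat_mult of_rat_of_int_eq)
    have bB: "real_of_int b \<le> B" using x b by simp
    have "\<bar>real_of_int a\<bar> = real_of_int b * \<bar>real_of_rat x\<bar>" using ra bpos by (simp add: abs_mult)
    also have "\<dots> \<le> B * C" using x bB bpos by (intro mult_mono) auto
    finally have aM: "\<bar>real_of_int a\<bar> \<le> B * C" .
    have "\<bar>a\<bar> \<le> M" using aM unfolding M_def by linarith
    moreover have "\<bar>b\<bar> \<le> M" using bB bpos unfolding M_def by linarith
    ultimately have "(a,b) \<in> {-M..M} \<times> {-M..M}" by auto
    thus "x \<in> (\<lambda>(a,b). of_int a / of_int b) ` ({-M..M} \<times> {-M..M})"
      using xab by force
  qed
  thus ?thesis by (rule finite_subset) auto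
qed

definition NA :: "nat \<Rightarrow> (nat \<Rightarrow> int) \<Rightarrow> real" where
  "NA K v = (\<Sum>n<K. \<bar>real_of_int (v n)\<bar>)"
definition NG :: "nat \<Rightarrow> (nat \<Rightarrow> rat) \<Rightarrow> real" where
  "NG K v = (\<Sum>n<K. \<bar>real_of_rat (v n)\<bar> + ln (real_of_int (den (v n))))"
definition NQ :: "nat \<Rightarrow> (nat \<Rightarrow> rat) \<Rightarrow> real" where
  "NQ K v = (\<Sum>n<K. ln (real_of_int (den (v n))))"

lemma term_le_sum:
  fixes f :: "nat \<Rightarrow> real"
  assumes "\<And>n. f n \<ge> 0" "n < K"
  shows "f n \<le> (\<Sum>n<K. f n)"
  using assms by (intro member_le_sum) auto

lemma proper_NA: "proper_norm (Zsum K) (NA K)"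
  unfolding proper_norm_def
proof (intro conjI ballI allI)
  fix g assume g: "g \<in> carrier (Zsum K)"
  have "NA K g = 0 \<longleftrightarrow> (\<forall>n\<in>{..<K}. \<bar>real_of_int (g n)\<bar> = 0)"
    unfolding NA_def by (rule sum_nonneg_eq_0_iff) auto
  also have "\<dots> \<longleftrightarrow> g = \<one>\<^bsub>Zsum K\<^esub>"
    using g fun_zero_iff[of K g] by (simp add: Zsum_def)
  finally show "NA K g = 0 \<longleftrightarrow> g = \<one>\<^bsub>Zsum K\<^esub>" .
  show "NA K (inv\<^bsub>Zsum K\<^esub> g) = NA K g" using g by (simp add: Zsum_inv NA_def)
next
  fix g h assume g: "g \<in> carrier (Zsum K)" and h: "h \<in> carrier (Zsum K)"
  show "NA K (g \<otimes>\<^bsub>Zsum K\<^esub> h) \<le> NA K g + NA K h"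
    unfolding NA_def sum.distrib[symmetric] by (intro sum_mono) (simp add: Zsum_def abs_triangle_ineq)
next
  fix r :: real
  have "{g \<in> carrier (Zsum K). NA K g \<le> r} \<subseteq>
        {v. (\<forall>n<K. v n \<in> {-\<lceil>r\<rceil>..\<lceil>r\<rceil>}) \<and> (\<forall>n\<ge>K. v n = 0)}"
  proof safe
    fix g n assume g: "g \<in> carrier (Zsum K)" "NA K g \<le> r" and n: "n < K"
    have "\<bar>real_of_int (g n)\<bar> \<le> NA K g" unfolding NA_def
      by (rule term_le_sum[of "\<lambda>n. \<bar>real_of_int (g n)\<bar>"]) (use n in auto)
    hence "\<bar>real_of_int (g n)\<bar> \<le> r" using g by linarith
    thus "g n \<in> {-\<lceil>r\<rceil>..\<lceil>r\<rceil>}" by (auto, linarith+)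
  qed (auto simp: Zsum_def)
  thus "finite {g \<in> carrier (Zsum K). NA K g \<le> r}"
    by (rule finite_subset) (rule finite_funs, simp)
qed

lemma den_le_exp: "ln (real_of_int (den x)) \<le> r \<Longrightarrow> real_of_int (den x) \<le> exp r"
  by (metis den_pos exp_le_cancel_iff exp_ln of_int_0_less_iff)

lemma proper_NG: "proper_norm (Dsum K) (NG K)"
  unfolding proper_norm_def
proof (intro conjI ballI allI)
  fix g assume g: "g \<in> carrier (Dsum K)"
  have "NG K g = 0 \<longleftrightarrow> (\<forall>n\<in>{..<K}. \<bar>real_of_rat (g n)\<bar> + ln (real_of_int (den (g n))) = 0)"
    unfolding NG_def by (rule sum_nonneg_eq_0_iff) (auto intro: add_nonneg_nonneg ln_den_ge0)
  also have "\<dots> \<longleftrightarrow> (\<forall>n\<in>{..<K}. g n = 0)"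
  proof -
    have "\<bar>real_of_rat x\<bar> + ln (real_of_int (den x)) = 0 \<longleftrightarrow> x = 0" for x
    proof
      assume h: "\<bar>real_of_rat x\<bar> + ln (real_of_int (den x)) = 0"
      have "\<bar>real_of_rat x\<bar> = 0" using h ln_den_ge0[of x] abs_ge_zero[of "real_of_rat x"] by linarith
      thus "x = 0" by simp
    qed (use den_int[of 0] in simp)
    thus ?thesis by simp
  qed
  also have "\<dots> \<longleftrightarrow> g = \<one>\<^bsub>Dsum K\<^esub>"
    using g fun_zero_iff[of K g] by (simp add: Dsum_def)
  finally show "NG K g = 0 \<longleftrightarrow> g = \<one>\<^bsub>Dsum K\<^esub>" .
  show "NG K (inv\<^bsub>Dsum K\<^esub> g) = NG K g" using g by (simp add: Dsum_inv NG_def den_uminus)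
next
  fix g h assume g: "g \<in> carrier (Dsum K)" and h: "h \<in> carrier (Dsum K)"
  have "NG K (g \<otimes>\<^bsub>Dsum K\<^esub> h) =
      (\<Sum>n<K. \<bar>real_of_rat (g n + h n)\<bar> + ln (real_of_int (den (g n + h n))))"
    by (simp add: NG_def Dsum_def)
  also have "\<dots> \<le> (\<Sum>n<K. (\<bar>real_of_rat (g n)\<bar> + ln (real_of_int (den (g n)))) +
      (\<bar>real_of_rat (h n)\<bar> + ln (real_of_int (den (h n)))))"
  proof (rule sum_mono)
    fix n
    have "\<bar>real_of_rat (g n + h n)\<bar> \<le> \<bar>real_of_rat (g n)\<bar> + \<bar>real_of_rat (h n)\<bar>"
      by (metis abs_triangle_ineq of_rat_add)
    thus "\<bar>real_of_rat (g n + h n)\<bar> + ln (real_of_int (den (g n + h n))) \<le>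
      (\<bar>real_of_rat (g n)\<bar> + ln (real_of_int (den (g n)))) +
      (\<bar>real_of_rat (h n)\<bar> + ln (real_of_int (den (h n))))"
      using ln_den_add[of "g n" "h n"] by linarith
  qed
  also have "\<dots> = NG K g + NG K h" by (simp add: NG_def sum.distrib)
  finally show "NG K (g \<otimes>\<^bsub>Dsum K\<^esub> h) \<le> NG K g + NG K h" .
next
  fix r :: real
  define S where "S = {x. real_of_int (den x) \<le> exp r \<and> \<bar>real_of_rat x\<bar> \<le> r}"
  have "{g \<in> carrier (Dsum K). NG K g \<le> r} \<subseteq>
        {v. (\<forall>n<K. v n \<in> S)
            \<and> (\<forall>n\<ge>K. v n = 0)}"
  proof safe
    fix g n assume g: "g \<in> carrier (Dsum K)" "NG K g \<le> r" and n: "n < K"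
    have "\<bar>real_of_rat (g n)\<bar> + ln (real_of_int (den (g n))) \<le> NG K g" unfolding NG_def
      by (rule term_le_sum[of "\<lambda>n. \<bar>real_of_rat (g n)\<bar> + ln (real_of_int (den (g n)))"])
         (use n ln_den_ge0 in \<open>auto intro: add_nonneg_nonneg\<close>)
    hence "\<bar>real_of_rat (g n)\<bar> \<le> r" "ln (real_of_int (den (g n))) \<le> r"
      using g ln_den_ge0[of "g n"] by linarith+
    thus "g n \<in> S"
      using den_le_exp unfolding S_def by auto
  qed (auto simp: Dsum_def)
  thus "finite {g \<in> carrier (Dsum K). NG K g \<le> r}"
    by (rule finite_subset) (rule finite_funs, unfold S_def, rule bounded_rats_finite)
qed

lemma Psum_den1: "g \<in> carrier (Psum K) \<Longrightarrow> den (g n) = 1 \<longleftrightarrow> g n = 0"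
  using Psum_frac[of g K n] den_1_iff[of "g n"] frac_zero_iff[of "g n"] by auto

lemma proper_NQ: "proper_norm (Psum K) (NQ K)"
  unfolding proper_norm_def
proof (intro conjI ballI allI)
  fix g assume g: "g \<in> carrier (Psum K)"
  have "NQ K g = 0 \<longleftrightarrow> (\<forall>n\<in>{..<K}. ln (real_of_int (den (g n))) = 0)"
    unfolding NQ_def by (rule sum_nonneg_eq_0_iff) (auto intro: ln_den_ge0)
  also have "\<dots> \<longleftrightarrow> (\<forall>n\<in>{..<K}. g n = 0)"
    using Psum_den1[OF g] ln_den_eq0 by simp
  also have "\<dots> \<longleftrightarrow> g = \<one>\<^bsub>Psum K\<^esub>"
    using g fun_zero_iff[of K g] by (simp add: Psum_def)
  finally show "NQ K g = 0 \<longleftrightarrow> g = \<one>\<^bsub>Psum K\<^esub>" .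
  show "NQ K (inv\<^bsub>Psum K\<^esub> g) = NQ K g" using g by (simp add: Psum_inv NQ_def den_uminus den_frac)
next
  fix g h assume g: "g \<in> carrier (Psum K)" and h: "h \<in> carrier (Psum K)"
  show "NQ K (g \<otimes>\<^bsub>Psum K\<^esub> h) \<le> NQ K g + NQ K h"
    unfolding NQ_def sum.distrib[symmetric]
    by (intro sum_mono) (simp add: Psum_def den_frac ln_den_add)
next
  fix r :: real
  define S where "S = {x. real_of_int (den x) \<le> exp r \<and> \<bar>real_of_rat x\<bar> \<le> 1}"
  have "{g \<in> carrier (Psum K). NQ K g \<le> r} \<subseteq>
        {v. (\<forall>n<K. v n \<in> S)
            \<and> (\<forall>n\<ge>K. v n = 0)}"
  proof safe
    fix g n assume g: "g \<in> carrier (Psum K)" "NQ K g \<le> r" and n: "n < K"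
    have "ln (real_of_int (den (g n))) \<le> NQ K g" unfolding NQ_def
      by (rule term_le_sum[of "\<lambda>n. ln (real_of_int (den (g n)))"])
         (use n ln_den_ge0 in auto)
    hence l: "ln (real_of_int (den (g n))) \<le> r" using g by linarith
    have "0 \<le> g n" "g n < 1" using g n by (auto simp: Psum_def)
    hence "\<bar>real_of_rat (g n)\<bar> \<le> 1"
      by (metis abs_of_nonneg less_eq_rat_def of_rat_1 of_rat_less_eq zero_le_of_rat_iff)
    with l show "g n \<in> S"
      using den_le_exp unfolding S_def by auto
  qed (auto simp: Psum_def)
  thus "finite {g \<in> carrier (Psum K). NQ K g \<le> r}"
    by (rule finite_subset) (rule finite_funs, unfold S_def, rule bounded_rats_finite)
qed

lemma den_zero[simp]: "den 0 = 1"
  using den_int[of 0] by simp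

lemma distA: "g \<in> carrier (Zsum K) \<Longrightarrow>
  norm_dist (Zsum K) (NA K) g h = (\<Sum>n<K. \<bar>real_of_int (- g n + h n)\<bar>)"
  unfolding norm_dist_def by (simp only: Zsum_inv) (simp add: NA_def Zsum_def)

lemma distG: "g \<in> carrier (Dsum K) \<Longrightarrow>
  norm_dist (Dsum K) (NG K) g h =
   (\<Sum>n<K. \<bar>real_of_rat (- g n + h n)\<bar> + ln (real_of_int (den (- g n + h n))))"
  unfolding norm_dist_def by (simp only: Dsum_inv) (simp add: NG_def Dsum_def)

lemma distQ: "g \<in> carrier (Psum K) \<Longrightarrow>
  norm_dist (Psum K) (NQ K) g h = (\<Sum>n<K. ln (real_of_int (den (- g n + h n))))"
  unfolding norm_dist_def by (simp only: Psum_inv) (simp add: NQ_def Psum_def frac_frac_add den_frac)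

lemma rat_abs_to_real:
  fixes a b :: rat
  assumes "\<bar>a\<bar> \<le> \<bar>b\<bar> + 1"
  shows "\<bar>real_of_rat a\<bar> \<le> \<bar>real_of_rat b\<bar> + 1"
proof -
  have "real_of_rat \<bar>a\<bar> \<le> real_of_rat (\<bar>b\<bar> + 1)" using assms by (simp only: of_rat_less_eq)
  thus ?thesis by (simp add: of_rat_add)
qed

lemma floor_diff_bound:
  fixes x y :: rat
  shows "\<bar>real_of_int (- \<lfloor>x\<rfloor> + \<lfloor>y\<rfloor>)\<bar> \<le> \<bar>real_of_rat (- x + y)\<bar> + 1"
proof -
  have a: "of_int \<lfloor>x\<rfloor> \<le> x" "x < of_int \<lfloor>x\<rfloor> + 1" "of_int \<lfloor>y\<rfloor> \<le> y" "y < of_int \<lfloor>y\<rfloor> + 1"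
    by linarith+
  have b: "-x+y \<le> \<bar>-x+y\<bar>" "x - y \<le> \<bar>-x+y\<bar>" by auto
  have "\<bar>rat_of_int (- \<lfloor>x\<rfloor> + \<lfloor>y\<rfloor>)\<bar> \<le> \<bar>-x+y\<bar> + 1"
    by (simp only: abs_le_iff of_int_add of_int_minus, intro conjI; use a b in linarith)
  from rat_abs_to_real[OF this] show ?thesis by (simp only: of_rat_of_int_eq)
qed

lemma den_frac_diff: "den (- frac_rat x + frac_rat y) = den (- x + y)"
proof -
  have "- frac_rat x + frac_rat y = (- x + y) + of_int (\<lfloor>x\<rfloor> - \<lfloor>y\<rfloor>)"
    unfolding frac_rat_def by simp
  thus ?thesis by (simp only: den_add_int)
qed

lemma hh_term:
  fixes q q' :: rat
  assumes "0 \<le> q" "q < 1" "0 \<le> q'" "q' < 1"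
  shows "\<bar>real_of_rat (- (of_int a + q) + (of_int a' + q'))\<bar> + ln (real_of_int (den (- (of_int a + q) + (of_int a' + q'))))
     \<le> \<bar>real_of_int (- a + a')\<bar> + 1 + ln (real_of_int (den (- q + q')))"
proof -
  have e: "- (of_int a + q) + (of_int a' + q') = (- q + q') + of_int (- a + a')" by simp
  have "\<bar>- (of_int a + q) + (of_int a' + q')\<bar> \<le> \<bar>rat_of_int (- a + a')\<bar> + 1"
    using assms by (simp only: e abs_le_iff, intro conjI; simp; linarith)
  from rat_abs_to_real[OF this] have
    "\<bar>real_of_rat (- (of_int a + q) + (of_int a' + q'))\<bar> \<le> \<bar>real_of_int (- a + a')\<bar> + 1"
    by (simp only: of_rat_of_int_eq)
  moreover have "den (- (of_int a + q) + (of_int a' + q')) = den (- q + q')"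
    unfolding e by (rule den_add_int)
  ultimately show ?thesis by simp
qed

theorem mainTheorem17:
  fixes K :: nat
  assumes "K \<ge> 1"
  shows "coarsely_split (Zsum K) (Dsum K) (Psum K) incl_sum quot_sum"
proof -
  define f where "f = (\<lambda>g::nat\<Rightarrow>rat. ((\<lambda>n. \<lfloor>g n\<rfloor>), quot_sum g))"
  define hh where "hh = (\<lambda>p::(nat\<Rightarrow>int)\<times>(nat\<Rightarrow>rat). (\<lambda>n. of_int (fst p n) + snd p n))"
  define dA where "dA = norm_dist (Zsum K) (NA K)"
  define dG where "dG = norm_dist (Dsum K) (NG K)"
  define dQ where "dQ = norm_dist (Psum K) (NQ K)"
  define dS where "dS = (\<lambda>(a, q) (a', q'). dA a a' + dQ q q')"
  have dS_eq: "dS (a, q) (a', q') = dA a a' + dQ q q'" for a q a' q' by (simp add: dS_def)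
  have qhom: "quot_sum \<in> hom (Dsum K) (Psum K)" using short_exact_main unfolding short_exact_def by blast
  have fmem: "f g \<in> carrier (Zsum K) \<times> carrier (Psum K)" if g: "g \<in> carrier (Dsum K)" for g
  proof -
    have "quot_sum g \<in> carrier (Psum K)" using qhom g by (rule hom_in_carrier)
    moreover have "(\<lambda>n. \<lfloor>g n\<rfloor>) \<in> carrier (Zsum K)" using g by (auto simp: Zsum_def Dsum_def)
    ultimately show ?thesis by (simp add: f_def)
  qed
  have Pq: "0 \<le> q n \<and> q n < 1" if "q \<in> carrier (Psum K)" for q n
    using that by (cases "n < K") (auto simp: Psum_def)
  have hhmem: "hh p \<in> carrier (Dsum K)" if p: "p \<in> carrier (Zsum K) \<times> carrier (Psum K)" for p
    using p by (auto simp: hh_def Zsum_def Psum_def Dsum_def intro!: dyadic_add dyadic_int)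
  have hf: "hh (f g) = g" for g
    by (simp add: hh_def f_def quot_sum_def frac_rat_def)
  have fh: "f (hh p) = p" if p: "p \<in> carrier (Zsum K) \<times> carrier (Psum K)" for p
  proof -
    obtain a q where pq: "p = (a, q)" by (cases p)
    have q: "q \<in> carrier (Psum K)" using p pq by auto
    have fl: "\<lfloor>rat_of_int (a n) + q n\<rfloor> = a n" for n
      using Pq[OF q, of n] by (simp add: floor_eq_iff)
    have fr: "frac_rat (rat_of_int (a n) + q n) = q n" for n
      using Psum_frac[OF q, of n] frac_add_int[of "q n" "a n"] by (simp add: add.commute)
    show ?thesis using fl fr by (simp add: pq f_def hh_def quot_sum_def)
  qed
  have dG0: "dG g g = 0" if "g \<in> carrier (Dsum K)" for g using that by (simp add: dG_def distG)
  have dA0: "dA a a = 0" if "a \<in> carrier (Zsum K)" for a using that by (simp add: dA_def distA)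
  have dQ0: "dQ q q = 0" if "q \<in> carrier (Psum K)" for q using that by (simp add: dQ_def distQ)
  have cf: "coarse_map (carrier (Dsum K)) dG (carrier (Zsum K) \<times> carrier (Psum K)) dS f"
    unfolding coarse_map_def
  proof (intro conjI ballI allI)
    fix g assume "g \<in> carrier (Dsum K)" thus "f g \<in> carrier (Zsum K) \<times> carrier (Psum K)" by (rule fmem)
  next
    fix \<delta> :: real
    show "\<exists>\<epsilon>. \<forall>x\<in>carrier (Dsum K). \<forall>y\<in>carrier (Dsum K). dG x y \<le> \<delta> \<longrightarrow> dS (f x) (f y) \<le> \<epsilon>"
    proof (intro exI ballI impI)
      fix x y assume x: "x \<in> carrier (Dsum K)" and y: "y \<in> carrier (Dsum K)" and d: "dG x y \<le> \<delta>"
      have qx: "quot_sum x \<in> carrier (Psum K)" using qhom x by (rule hom_in_carrier)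
      have ax: "(\<lambda>n. \<lfloor>x n\<rfloor>) \<in> carrier (Zsum K)" using x by (auto simp: Zsum_def Dsum_def)
      define T where "T n = \<bar>real_of_rat (- x n + y n)\<bar> + ln (real_of_int (den (- x n + y n)))" for n
      have dGT: "dG x y = (\<Sum>n<K. T n)" using x by (simp add: dG_def distG T_def)
      have "dA (\<lambda>n. \<lfloor>x n\<rfloor>) (\<lambda>n. \<lfloor>y n\<rfloor>) = (\<Sum>n<K. \<bar>real_of_int (- \<lfloor>x n\<rfloor> + \<lfloor>y n\<rfloor>)\<bar>)"
        using ax by (simp only: dA_def distA)
      also have "\<dots> \<le> (\<Sum>n<K. T n + 1)"
      proof (rule sum_mono)
        fix n
        show "\<bar>real_of_int (- \<lfloor>x n\<rfloor> + \<lfloor>y n\<rfloor>)\<bar> \<le> T n + 1"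
          using floor_diff_bound[of "x n" "y n"] ln_den_ge0[of "- x n + y n"] unfolding T_def
          by linarith
      qed
      also have "\<dots> = dG x y + real K"
        unfolding dGT sum.distrib by simp
      finally have 1: "dA (\<lambda>n. \<lfloor>x n\<rfloor>) (\<lambda>n. \<lfloor>y n\<rfloor>) \<le> dG x y + real K" .
      have "dQ (quot_sum x) (quot_sum y) = (\<Sum>n<K. ln (real_of_int (den (- frac_rat (x n) + frac_rat (y n)))))"
        using qx by (simp only: dQ_def distQ) (simp add: quot_sum_def)
      also have "\<dots> \<le> (\<Sum>n<K. T n)"
      proof (rule sum_mono)
        fix n
        show "ln (real_of_int (den (- frac_rat (x n) + frac_rat (y n)))) \<le> T n"
          unfolding T_def den_frac_diff by simp
      qed
      finally have 2: "dQ (quot_sum x) (quot_sum y) \<le> dG x y" unfolding dGT .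
      have "dS (f x) (f y) = dA (\<lambda>n. \<lfloor>x n\<rfloor>) (\<lambda>n. \<lfloor>y n\<rfloor>) + dQ (quot_sum x) (quot_sum y)"
        by (simp only: f_def dS_eq prod.simps)
      thus "dS (f x) (f y) \<le> 2 * \<delta> + real K"
        using 1 2 d by linarith
    qed
  qed
  have ch: "coarse_map (carrier (Zsum K) \<times> carrier (Psum K)) dS (carrier (Dsum K)) dG hh"
    unfolding coarse_map_def
  proof (intro conjI ballI allI)
    fix p assume "p \<in> carrier (Zsum K) \<times> carrier (Psum K)" thus "hh p \<in> carrier (Dsum K)" by (rule hhmem)
  next
    fix \<delta> :: real
    show "\<exists>\<epsilon>. \<forall>x\<in>carrier (Zsum K) \<times> carrier (Psum K). \<forall>y\<in>carrier (Zsum K) \<times> carrier (Psum K).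
             dS x y \<le> \<delta> \<longrightarrow> dG (hh x) (hh y) \<le> \<epsilon>"
    proof (intro exI ballI impI)
      fix p p' assume p: "p \<in> carrier (Zsum K) \<times> carrier (Psum K)"
        and p': "p' \<in> carrier (Zsum K) \<times> carrier (Psum K)" and d: "dS p p' \<le> \<delta>"
      obtain a q where pq: "p = (a, q)" by (cases p)
      obtain a' q' where pq': "p' = (a', q')" by (cases p')
      have a: "a \<in> carrier (Zsum K)" and q: "q \<in> carrier (Psum K)" using p pq by auto
      have q': "q' \<in> carrier (Psum K)" using p' pq' by auto
      have "dG (hh p) (hh p') = (\<Sum>n<K. \<bar>real_of_rat (- (of_int (a n) + q n) + (of_int (a' n) + q' n))\<bar>
          + ln (real_of_int (den (- (of_int (a n) + q n) + (of_int (a' n) + q' n)))))"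
        using hhmem[OF p] unfolding dG_def by (simp only: distG) (simp add: hh_def pq pq')
      also have "\<dots> \<le> (\<Sum>n<K. \<bar>real_of_int (- a n + a' n)\<bar> + 1 + ln (real_of_int (den (- q n + q' n))))"
        by (rule sum_mono) (use Pq[OF q] Pq[OF q'] in \<open>blast intro: hh_term\<close>)
      also have "\<dots> = dA a a' + real K + dQ q q'"
        using a q by (simp add: dA_def dQ_def distA distQ sum.distrib)
      also have "\<dots> = dS p p' + real K" by (simp add: pq pq' dS_eq)
      finally show "dG (hh p) (hh p') \<le> \<delta> + real K" using d by simp
    qed
  qed
  have ce: "coarse_equivalence (carrier (Dsum K)) dG (carrier (Zsum K) \<times> carrier (Psum K)) dS f"
    unfolding coarse_equivalence_def
  proof (intro conjI exI[of _ hh] exI[of _ 0] ballI)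
    show "coarse_map (carrier (Dsum K)) dG (carrier (Zsum K) \<times> carrier (Psum K)) dS f" by (rule cf)
    show "coarse_map (carrier (Zsum K) \<times> carrier (Psum K)) dS (carrier (Dsum K)) dG hh" by (rule ch)
  next
    fix x assume "x \<in> carrier (Dsum K)" thus "dG (hh (f x)) x \<le> 0" by (simp add: hf dG0)
  next
    fix y assume y: "y \<in> carrier (Zsum K) \<times> carrier (Psum K)"
    obtain a q where pq: "y = (a, q)" by (cases y)
    show "dS (f (hh y)) y \<le> 0" using y by (simp add: fh pq dS_eq dA0 dQ0)
  qed
  have incl: "\<forall>a\<in>carrier (Zsum K). dS (f (incl_sum a)) (a, \<one>\<^bsub>Psum K\<^esub>) \<le> 0"
  proof
    fix a assume a: "a \<in> carrier (Zsum K)"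
    have "f (incl_sum a) = (a, \<one>\<^bsub>Psum K\<^esub>)"
      by (simp add: f_def incl_sum_def quot_sum_def frac_int Psum_def)
    moreover have "\<one>\<^bsub>Psum K\<^esub> \<in> carrier (Psum K)" by (simp add: Psum_def)
    ultimately show "dS (f (incl_sum a)) (a, \<one>\<^bsub>Psum K\<^esub>) \<le> 0" using a by (simp add: dS_eq dA0 dQ0)
  qed
  have proj: "\<forall>g\<in>carrier (Dsum K). dQ (snd (f g)) (quot_sum g) \<le> 0"
  proof
    fix g assume g: "g \<in> carrier (Dsum K)"
    have "quot_sum g \<in> carrier (Psum K)" using qhom g by (rule hom_in_carrier)
    thus "dQ (snd (f g)) (quot_sum g) \<le> 0" by (simp add: f_def dQ0)
  qed
  show ?thesis
    unfolding coarsely_split_def Let_def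
    apply (rule conjI[OF short_exact_main])
    apply (rule exI[of _ "NA K"], rule exI[of _ "NG K"], rule exI[of _ "NQ K"], rule exI[of _ f])
    apply (intro conjI proper_NA proper_NG proper_NQ)
    subgoal using ce unfolding dS_def dA_def dG_def dQ_def .
    subgoal using incl unfolding dS_def dA_def dQ_def by (rule exI[of _ 0])
    subgoal using proj unfolding dQ_def by (rule exI[of _ 0])
    done
qed

end
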